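(* Let $r \in \mathbb{Z}$ and let $P_{n,k}=[x^n]\,\frac{1+rx^2}{1+x^2}\left(\frac{x}{1+x^2}\right)^k$ for $n,k\ge 0$. Then for all $n,k\ge 0$, $$P_{n,k}=\left(\binom{\frac{n+k}{2}}{k}-r \binom{\frac{n+k-2}{2}}{k}\right)(-1)^{\frac{n-k}{2}}\frac{1+(-1)^{n-k}}{2}+r\cdot 0^{n+k},$$ and $$P_{n,k}=\binom{\frac{n+k}{2}}{k}\left(1-\frac{r(n-k)}{n+k+0^{n+k}}\right)(-1)^{\frac{n-k}{2}}\frac{1+(-1)^{n-k}}{2},$$ where any expression carrying the factor $\frac{1+(-1)^{n-k}}{2}$ is interpreted as $0$ when $n-k$ is odd.
   Context: $[x^n]h(x)$ denotes the coefficient of $x^n$ in the power series $h(x)$. $0^m$ equals $1$ if $m=0$ and $0$ if $m>0$. For an integer $a$ and integer $k\ge 0$, $\binom{a}{k}=\frac{a(a-1)\cdots(a-k+1)}{k!}$ (so $\binom{-1}{0}=1$ and $\binom{a}{k}=0$ when $0\le a<k$). The numbers $P_{n,k}$ form the coefficient array (Riordan array $\left(\frac{1+rx^2}{1+x^2},\frac{x}{1+x^2}\right)$) of the restricted Chebyshev–Boubaker polynomials $P_n(x;r)=\sum_k P_{n,k}x^k$. *)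

theory Defs
  imports "HOL-Computational_Algebra.Formal_Power_Series"
begin

definition P :: "int \<Rightarrow> nat \<Rightarrow> nat \<Rightarrow> rat" where
  "P r n k = fps_nth ((1 + of_int r * fps_X ^ 2) / (1 + fps_X ^ 2)
                       * (fps_X / (1 + fps_X ^ 2)) ^ k) n"

end

theory Submission
  imports Defs
begin

definition G :: "rat fps" where "G = Abs_fps (\<lambda>n. if even n then (-1) ^ (n div 2) else 0)"

lemma nth_X2: "fps_nth ((1 + fps_X ^ 2) * f) n = fps_nth f n + (if n < 2 then 0 else fps_nth f (n - 2))"
  by (simp add: distrib_right fps_X_power_mult_nth)

lemma G_mult: "(1 + fps_X ^ 2) * G = 1"
proof (rule fps_ext)
  fix n show "fps_nth ((1 + fps_X ^ 2) * G) n = fps_nth (1::rat fps) n"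
    unfolding nth_X2 G_def
    apply (cases "n < 2")
     apply (auto simp: less_2_cases_iff)
    apply (cases "even n")
     apply (auto simp: elim!: evenE oddE)
    subgoal for b by (cases b) auto
    done
qed

lemma inv_G: "inverse (1 + fps_X ^ 2 :: rat fps) = G"
  using G_mult by (rule fps_inverse_unique)

lemma Gpow: "fps_nth (G ^ Suc k) n = (if even n then (-1) ^ (n div 2) * of_nat ((k + n div 2) choose k) else 0)"
proof (induction k arbitrary: n)
  case 0 then show ?case by (simp add: G_def)
next
  case (Suc k)
  have rec: "fps_nth (G ^ Suc (Suc k)) n + (if n < 2 then 0 else fps_nth (G ^ Suc (Suc k)) (n - 2)) = fps_nth (G ^ Suc k) n" for n
  proof -
    have "(1 + fps_X ^ 2) * G ^ Suc (Suc k) = G ^ Suc k"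
      by (metis G_mult mult.assoc mult_1 power_Suc)
    then show ?thesis using nth_X2[of "G ^ Suc (Suc k)" n] by (simp only:)
  qed
  show ?case
  proof (induction n rule: less_induct)
    case (less n)
    show ?case
    proof (cases "n < 2")
      case True
      then show ?thesis using rec[of n] Suc.IH[of n] by (auto simp: less_2_cases_iff)
    next
      case False
      have h: "fps_nth (G ^ Suc (Suc k)) n = fps_nth (G ^ Suc k) n - fps_nth (G ^ Suc (Suc k)) (n - 2)"
        using rec[of n] False by simp
      show ?thesis
      proof (cases "even n")
        case True
        define j where "j = (n - 2) div 2"
        have j: "n = Suc (Suc (2*j))" using False True unfolding j_def by presburger
        have "fps_nth (G ^ Suc (Suc k)) n = (-1)^(Suc j) * of_nat (k + Suc j choose k) - (-1)^j * of_nat (Suc k + j choose Suc k)"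
          using h less.IH[of "n-2"] Suc.IH[of n] j by simp
        also have "\<dots> = (-1)^(Suc j) * of_nat (Suc k + Suc j choose Suc k)"
        proof -
          have "Suc k + Suc j choose Suc k = (k + Suc j choose k) + (Suc k + j choose Suc k)"
            by (simp add: add.commute)
          then show ?thesis by (simp add: algebra_simps)
        qed
        finally show ?thesis using j by simp
      next
        case False
        then show ?thesis using h less.IH[of "n-2"] Suc.IH[of n] \<open>\<not> n < 2\<close> by auto
      qed
    qed
  qed
qed


definition c :: "nat \<Rightarrow> nat \<Rightarrow> nat \<Rightarrow> rat" where
  "c k n m = (if k + m \<le> n \<and> even (n - k - m) then (-1) ^ ((n - k - m) div 2) * of_nat (k + (n - k - m) div 2 choose k) else 0)"

lemma P_eq: "P r n k = c k n 0 + of_int r * c k n 2"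
proof -
  have u: "fps_nth (1 + fps_X ^ 2 :: rat fps) 0 \<noteq> 0" by simp
  have "(1 + of_int r * fps_X ^ 2) / (1 + fps_X ^ 2) * (fps_X / (1 + fps_X ^ 2)) ^ k
      = (1 + of_int r * fps_X ^ 2) * G * (fps_X * G) ^ k"
    by (simp add: fps_divide_unit[OF u] inv_G)
  also have "\<dots> = (1 + of_int r * fps_X ^ 2) * (fps_X ^ k * G ^ Suc k)"
    by (simp add: power_mult_distrib algebra_simps)
  finally have e: "P r n k = fps_nth ((1 + of_int r * fps_X ^ 2) * (fps_X ^ k * G ^ Suc k)) n"
    unfolding P_def by simp
  have m: "fps_nth (fps_X ^ k * G ^ Suc k) m = c k m 0" for m
    unfolding fps_X_power_mult_nth Gpow c_def by auto
  have m2: "(if n < 2 then 0 else c k (n - 2) 0) = c k n 2"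
    by (auto simp: c_def)
  define f where "f = fps_X ^ k * G ^ Suc k"
  have d: "(1 + of_int r * fps_X ^ 2) * f = f + fps_const (of_int r) * (fps_X ^ 2 * f)"
    by (simp add: algebra_simps fps_of_int[symmetric] del: fps_of_int)
  show ?thesis unfolding e f_def[symmetric] d fps_add_nth fps_mult_left_const_nth
    fps_X_power_mult_nth unfolding f_def m
    using m2 by (simp add: m)
qed


lemma gch: "x \<ge> 0 \<Longrightarrow> (of_int x :: rat) gchoose k = of_nat (nat x choose k)"
  by (metis binomial_gbinomial int_nat_eq of_int_of_nat_eq)

theorem mainTheorem2:
  fixes r :: int and n k :: nat
  shows "(P r n k =
           (if even (n + k) then
              ((of_int ((int n + int k) div 2) gchoose k)
                 - of_int r * (of_int ((int n + int k - 2) div 2) gchoose k))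
              * (-1) powi ((int n - int k) div 2)
              * ((1 + (-1) powi (int n - int k)) / 2)
            else 0)
           + of_int r * 0 ^ (n + k)) \<and>
         P r n k =
           (if even (n + k) then
              (of_int ((int n + int k) div 2) gchoose k)
              * (1 - of_int r * of_int (int n - int k) / (of_nat (n + k) + 0 ^ (n + k)))
              * (-1) powi ((int n - int k) div 2)
              * ((1 + (-1) powi (int n - int k)) / 2)
            else 0)"
proof (cases "even (n + k)")
  case False
  have c0: "c k n 0 = 0" "c k n 2 = 0" using False by (auto simp: c_def)
  have z: "(0::rat) ^ (n + k) = 0" using False by (intro zero_power) presburger
  show ?thesis using False by (simp add: P_eq c0 z)
next
  case True
  show ?thesis
  proof (cases "n < k")
    case lt: True
    define d where "d = (k - n) div 2"
    have d: "k = n + 2 * d" "d \<ge> 1" using True lt unfolding d_def by presburger+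
    have c0: "c k n 0 = 0" "c k n 2 = 0" using lt by (auto simp: c_def)
    have z: "(0::rat) ^ (n + k) = 0" using d by simp
    have i1: "(int n + int k) div 2 = int (n + d)" using d by simp
    have i2: "(int n + int k - 2) div 2 = int (n + d - 1)" using d by simp
    have g1: "(of_int (int (n + d)) :: rat) gchoose k = 0"
      using d by (simp only: of_int_of_nat_eq binomial_gbinomial[symmetric]) simp
    have g2: "(of_int (int (n + d - 1)) :: rat) gchoose k = 0"
      using d by (simp only: of_int_of_nat_eq binomial_gbinomial[symmetric]) simp
    show ?thesis unfolding P_eq c0 i1 i2 g1 g2 z by simp
  next
    case ge: False
    define j where "j = (n - k) div 2"
    have j: "n = k + 2 * j" using True ge unfolding j_def by presburger
    have i1: "(int n + int k) div 2 = int (k + j)" using j by simp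
    have i3: "(int n - int k) div 2 = int j" using j by simp
    have i4: "(int n - int k) = int (2 * j)" using j by simp
    have c1: "c k n 0 = (-1) ^ j * of_nat ((k + j) choose k)" using j by (simp add: c_def)
    have g1: "(of_int (int (k + j)) :: rat) gchoose k = of_nat ((k + j) choose k)"
      by (simp only: of_int_of_nat_eq binomial_gbinomial[symmetric])
    show ?thesis
    proof (cases "k + j = 0")
      case True
      then have "n = 0" "k = 0" "j = 0" using j by auto
      then show ?thesis by (simp add: P_eq c_def)
    next
      case False
      have z: "(0::rat) ^ (n + k) = 0" using False j by simp
      have i2: "(int n + int k - 2) div 2 = int (k + j - 1)" using j False by simp arith
      have g2: "(of_int (int (k + j - 1)) :: rat) gchoose k = of_nat ((k + j - 1) choose k)"
        by (simp only: of_int_of_nat_eq binomial_gbinomial[symmetric])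
      have c2: "c k n 2 = (if j = 0 then 0 else (-1) ^ (j - 1) * of_nat ((k + j - 1) choose k))"
      proof -
        have "j > 0 \<Longrightarrow> (2 * j - 2) div 2 = j - 1 \<and> k + (j - 1) = k + j - 1" by auto
        then show ?thesis using j by (auto simp: c_def)
      qed
      have c2': "c k n 2 = - ((-1) ^ j * of_nat ((k + j - 1) choose k))"
      proof (cases j)
        case 0 then show ?thesis using c2 False by simp
      next
        case (Suc i) then show ?thesis using c2 by simp
      qed
      have absorb: "of_nat ((k + j - 1) choose k) * of_nat (k + j) = (of_nat ((k + j) choose k) * of_nat j :: rat)"
      proof -
        have "(k + j - k) * ((k + j) choose k) = (k + j) * ((k + j - 1) choose k)"
          by (rule binomial_absorb_comp)
        then have "j * ((k + j) choose k) = (k + j) * ((k + j - 1) choose k)" by simp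
        then have "(of_nat (j * ((k + j) choose k)) :: rat) = of_nat ((k + j) * ((k + j - 1) choose k))"
          by (simp only:)
        then show ?thesis by (simp add: algebra_simps)
      qed
      have p1: "P r n k = ((-1) ^ j * of_nat ((k + j) choose k)) - of_int r * ((-1) ^ j * of_nat ((k + j - 1) choose k))"
        by (simp add: P_eq c1 c2')
      have nk: "of_nat (n + k) + (0::rat) ^ (n + k) = 2 * of_nat (k + j)" using j z by simp
      have ink: "(of_int (int n - int k) :: rat) = 2 * of_nat j" using j by simp
      have kj: "(of_nat (k + j) :: rat) \<noteq> 0" using False by (metis of_nat_eq_0_iff)
      have e2: "of_nat ((k + j) choose k) * (1 - of_int r * (2 * of_nat j) / (2 * of_nat (k + j)))
           = of_nat ((k + j) choose k) - of_int r * (of_nat ((k + j - 1) choose k) :: rat)"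
      proof -
        have q: "of_nat ((k + j) choose k) * of_nat j / of_nat (k + j) = (of_nat ((k + j - 1) choose k) :: rat)"
          using kj absorb by (simp add: divide_eq_eq)
        have "of_nat ((k + j) choose k) * (1 - of_int r * (2 * of_nat j) / (2 * of_nat (k + j)))
           = of_nat ((k + j) choose k) - of_int r * (of_nat ((k + j) choose k) * of_nat j / of_nat (k + j) :: rat)"
        proof -
          have t: "of_int r * (2 * of_nat j) / (2 * of_nat (k + j)) = (of_int r * of_nat j / of_nat (k + j) :: rat)"
            by (metis mult.left_commute mult_divide_mult_cancel_left zero_neq_numeral)
          show ?thesis unfolding t by (simp add: algebra_simps)
        qed
        then show ?thesis by (simp only: q)
      qed
      have pw: "((1 + (-1::rat) ^ (2*j)) / 2) = 1" by simp
      have A: "P r n k = (if even (n + k) then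
              ((of_int ((int n + int k) div 2) gchoose k)
                 - of_int r * (of_int ((int n + int k - 2) div 2) gchoose k))
              * (-1) powi ((int n - int k) div 2)
              * ((1 + (-1) powi (int n - int k)) / 2)
            else 0)
           + of_int r * 0 ^ (n + k)"
        unfolding p1 i1 i2 i3 i4 g1 g2 z power_int_of_nat pw if_P[OF True]
        by (simp add: algebra_simps)
      have B: "P r n k =
           (if even (n + k) then
              (of_int ((int n + int k) div 2) gchoose k)
              * (1 - of_int r * of_int (int n - int k) / (of_nat (n + k) + 0 ^ (n + k)))
              * (-1) powi ((int n - int k) div 2)
              * ((1 + (-1) powi (int n - int k)) / 2)
            else 0)"
        unfolding nk ink
        unfolding p1 i1 i3 i4 g1 power_int_of_nat pw if_P[OF True] e2
        by (simp add: algebra_simps)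
      show ?thesis using A B by (rule conjI)
    qed
  qed
qed

end
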